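(* For every integer $n \ge 9$ of the form $n = 5k + 4$ with $k$ a positive integer, we have $\mathbf{car}(n, 3) \ge 4^{(n - 4)/5}$.
   Context: A partial deterministic finite (semi-)automaton (partial DFA) is a triple $\mathcal{A} = (Q, \Sigma, \delta)$ with $Q$ a finite set of states, $\Sigma$ a finite alphabet, and $\delta \colon Q \times \Sigma \rightharpoonup Q$ a partial transition function, extended to words $\delta\colon Q \times \Sigma^* \rightharpoonup Q$ in the usual way ($\delta(q,\varepsilon)=q$, $\delta(q, wa) = \delta(\delta(q,w),a)$, undefined if any step is undefined). A word $w \in \Sigma^*$ is carefully synchronising for $\mathcal{A}$ if there is a state $q \in Q$ such that $\delta(p, w)$ is defined and equals $q$ for every $p \in Q$. $\mathbf{car}(n, m)$ denotes the maximum, over all partial DFAs with $n$ states and $m$ letters that admit at least one carefully synchronising word, of the length of a shortest carefully synchronising word. *)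

theory Defs
  imports Main
begin

definition is_pdfa :: "nat \<Rightarrow> nat \<Rightarrow> (nat \<Rightarrow> nat \<Rightarrow> nat option) \<Rightarrow> bool" where
  "is_pdfa n m \<delta> \<longleftrightarrow>
     (\<forall>q a. (q < n \<and> a < m \<longrightarrow> (case \<delta> q a of None \<Rightarrow> True | Some p \<Rightarrow> p < n))
          \<and> (\<not> (q < n \<and> a < m) \<longrightarrow> \<delta> q a = None))"

fun delta_word :: "(nat \<Rightarrow> nat \<Rightarrow> nat option) \<Rightarrow> nat \<Rightarrow> nat list \<Rightarrow> nat option" where
  "delta_word \<delta> q [] = Some q"
| "delta_word \<delta> q (a # w) = (case \<delta> q a of None \<Rightarrow> None | Some p \<Rightarrow> delta_word \<delta> p w)"

definition carefully_sync :: "nat \<Rightarrow> nat \<Rightarrow> (nat \<Rightarrow> nat \<Rightarrow> nat option) \<Rightarrow> nat list \<Rightarrow> bool" where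
  "carefully_sync n m \<delta> w \<longleftrightarrow>
     set w \<subseteq> {..<m} \<and> (\<exists>q. \<forall>p<n. delta_word \<delta> p w = Some q)"

definition shortest_cs :: "nat \<Rightarrow> nat \<Rightarrow> (nat \<Rightarrow> nat \<Rightarrow> nat option) \<Rightarrow> nat" where
  "shortest_cs n m \<delta> = (LEAST l. \<exists>w. length w = l \<and> carefully_sync n m \<delta> w)"

definition car :: "nat \<Rightarrow> nat \<Rightarrow> nat" where
  "car n m = Sup {shortest_cs n m \<delta> | \<delta>. is_pdfa n m \<delta> \<and> (\<exists>w. carefully_sync n m \<delta> w)}"

end

theory Submission
  imports Defs
begin

lemma finite_pdfa: "finite {\<delta>. is_pdfa n m \<delta>}"
proof -
  let ?A = "{..<n} \<times> {..<m}"
  let ?B = "insert None (Some ` {..<n})"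
  let ?S = "{f. \<forall>x. (x \<in> ?A \<longrightarrow> f x \<in> ?B) \<and> (x \<notin> ?A \<longrightarrow> f x = (None::nat option))}"
  have fS: "finite ?S" by (rule finite_set_of_finite_funs) auto
  have "{\<delta>. is_pdfa n m \<delta>} \<subseteq> curry ` ?S"
  proof
    fix \<delta> assume "\<delta> \<in> {\<delta>. is_pdfa n m \<delta>}"
    hence H: "is_pdfa n m \<delta>" by simp
    have "case_prod \<delta> \<in> ?S"
      unfolding mem_Collect_eq
    proof (intro allI conjI impI)
      fix x :: "nat \<times> nat" assume "x \<in> ?A"
      then obtain q a where x: "x = (q, a)" "q < n" "a < m" by auto
      have c: "case \<delta> q a of None \<Rightarrow> True | Some p \<Rightarrow> p < n"
        using H x(2,3) unfolding is_pdfa_def by blast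
      show "case_prod \<delta> x \<in> ?B"
      proof (cases "\<delta> q a")
        case None thus ?thesis using x by simp
      next
        case (Some p)
        hence "p < n" using c by simp
        thus ?thesis using Some x by simp
      qed
    next
      fix x :: "nat \<times> nat" assume "x \<notin> ?A"
      then obtain q a where x: "x = (q, a)" "\<not> (q < n \<and> a < m)" by (cases x) auto
      hence "\<delta> q a = None" using H unfolding is_pdfa_def by blast
      thus "case_prod \<delta> x = None" using x by simp
    qed
    moreover have "\<delta> = curry (case_prod \<delta>)" by simp
    ultimately show "\<delta> \<in> curry ` ?S" by blast
  qed
  thus ?thesis using fS finite_subset by blast
qed

lemma car_ge:
  assumes "is_pdfa n m \<delta>" "carefully_sync n m \<delta> w0"
    and "\<And>w. carefully_sync n m \<delta> w \<Longrightarrow> B \<le> length w"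
  shows "B \<le> car n m"
proof -
  let ?X = "{shortest_cs n m \<delta> | \<delta>. is_pdfa n m \<delta> \<and> (\<exists>w. carefully_sync n m \<delta> w)}"
  have sub: "?X \<subseteq> shortest_cs n m ` {\<delta>. is_pdfa n m \<delta>}"
  proof
    fix y assume "y \<in> ?X"
    then obtain \<delta>' where "y = shortest_cs n m \<delta>'" "is_pdfa n m \<delta>'" by blast
    thus "y \<in> shortest_cs n m ` {\<delta>. is_pdfa n m \<delta>}" by blast
  qed
  have fin: "finite ?X" using finite_subset[OF sub] finite_pdfa by blast
  have mem: "shortest_cs n m \<delta> \<in> ?X" using assms(1,2) by blast
  have ex: "\<exists>l. \<exists>w. length w = l \<and> carefully_sync n m \<delta> w" using assms(2) by blast
  obtain w where w: "length w = (LEAST l. \<exists>w. length w = l \<and> carefully_sync n m \<delta> w)"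
      "carefully_sync n m \<delta> w"
    using LeastI_ex[OF ex] by blast
  have "B \<le> shortest_cs n m \<delta>" using assms(3)[OF w(2)] w(1) unfolding shortest_cs_def by simp
  also have "\<dots> \<le> Sup ?X" by (rule cSup_upper[OF mem bdd_above_finite[OF fin]])
  finally show ?thesis unfolding car_def .
qed

datatype st = D nat nat | Cs | Zp | Pd nat

locale cfam =
  fixes b P pad :: nat
  assumes b2: "2 \<le> b" and P2: "2 \<le> P"
begin

definition rot :: "nat \<Rightarrow> nat" where "rot p = (if p = 0 then P - 1 else p - 1)"

definition Dl :: "st \<Rightarrow> nat \<Rightarrow> st option" where
  "Dl x a = (if a = 0 then Some (case x of D p s \<Rightarrow> (if p = 1 then D 1 b else D p 0)
                                        | Cs \<Rightarrow> D 0 0 | Zp \<Rightarrow> D 1 b | Pd i \<Rightarrow> D 1 b)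
    else if a = 1 then (case x of D p s \<Rightarrow> Some (D (rot p) s) | Zp \<Rightarrow> Some Zp | Cs \<Rightarrow> None | Pd i \<Rightarrow> None)
    else if a = 2 then (case x of D p s \<Rightarrow>
              (if p = 0 then (if s = b then Some (D (P - 1) b) else None)
               else if p = 1 then (if s = b then Some Zp else if s + 1 < b then Some (D 0 (s + 1)) else Some Cs)
               else Some (D (p - 1) s))
            | Cs \<Rightarrow> Some (D (P - 1) 0) | Zp \<Rightarrow> Some Zp | Pd i \<Rightarrow> None)
    else None)"

fun Dw :: "st \<Rightarrow> nat list \<Rightarrow> st option" where
  "Dw x [] = Some x"
| "Dw x (a # w) = (case Dl x a of None \<Rightarrow> None | Some y \<Rightarrow> Dw y w)"

definition NN :: nat where "NN = P * (b + 1) + 2 + pad"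

definition enc :: "st \<Rightarrow> nat" where
  "enc x = (case x of D p s \<Rightarrow> p * (b + 1) + s | Cs \<Rightarrow> P * (b + 1) | Zp \<Rightarrow> P * (b + 1) + 1
            | Pd i \<Rightarrow> P * (b + 1) + 2 + i)"

definition dec :: "nat \<Rightarrow> st" where
  "dec q = (if q < P * (b + 1) then D (q div (b + 1)) (q mod (b + 1))
            else if q = P * (b + 1) then Cs else if q = P * (b + 1) + 1 then Zp
            else Pd (q - (P * (b + 1) + 2)))"

definition UU :: "st set" where
  "UU = {x. case x of D p s \<Rightarrow> p < P \<and> s \<le> b | Cs \<Rightarrow> True | Zp \<Rightarrow> True | Pd i \<Rightarrow> i < pad}"

definition dd :: "nat \<Rightarrow> nat \<Rightarrow> nat option" where
  "dd q a = (if q < NN \<and> a < 3 then map_option enc (Dl (dec q) a) else None)"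

lemma rot_lt: "p < P \<Longrightarrow> rot p < P"
  using P2 by (auto simp: rot_def)

lemma enc_lt: "x \<in> UU \<Longrightarrow> enc x < NN"
proof (cases x)
  case (D p s)
  assume "x \<in> UU"
  hence "p < P" "s \<le> b" using D by (auto simp: UU_def)
  hence "p * (b + 1) + s < (p + 1) * (b + 1)" by simp
  also have "\<dots> \<le> P * (b + 1)" using \<open>p < P\<close> by (intro mult_le_mono1) simp
  finally have "p * (b + 1) + s < P * (b + 1)" .
  thus ?thesis using D by (simp add: enc_def NN_def)
qed (auto simp: enc_def NN_def UU_def)

lemma dec_enc: "x \<in> UU \<Longrightarrow> dec (enc x) = x"
proof (cases x)
  case (D p s)
  assume "x \<in> UU"
  hence ps: "p < P" "s \<le> b" using D by (auto simp: UU_def)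
  hence "p * (b + 1) + s < (p + 1) * (b + 1)" by simp
  also have "\<dots> \<le> P * (b + 1)" using ps by (intro mult_le_mono1) simp
  finally have lt: "p * (b + 1) + s < P * (b + 1)" .
  have e: "p * (b + 1) + s = s + p * (b + 1)" by simp
  have "(s + p * (b + 1)) div (b + 1) = p + s div (b + 1)" by (rule div_mult_self1) simp
  moreover have "s div (b + 1) = 0" "s mod (b + 1) = s" using ps(2) by simp_all
  moreover have "(s + p * (b + 1)) mod (b + 1) = s mod (b + 1)" by (rule mod_mult_self1)
  ultimately have "(s + p * (b + 1)) div (b + 1) = p" "(s + p * (b + 1)) mod (b + 1) = s" by simp_all
  hence "(p * (b + 1) + s) div (b + 1) = p" "(p * (b + 1) + s) mod (b + 1) = s" by (simp_all only: e)
  thus ?thesis using D lt by (simp add: enc_def dec_def)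
qed (auto simp: enc_def dec_def)

lemma dec_UU: "q < NN \<Longrightarrow> dec q \<in> UU"
proof -
  assume q: "q < NN"
  show ?thesis
  proof (cases "q < P * (b + 1)")
    case True
    hence "q div (b + 1) < P" by (simp add: less_mult_imp_div_less)
    moreover have "q mod (b + 1) \<le> b" by (metis Suc_eq_plus1 less_Suc_eq_le mod_less_divisor zero_less_Suc)
    ultimately show ?thesis using True by (simp add: dec_def UU_def)
  next
    case False
    thus ?thesis using q by (auto simp: dec_def UU_def NN_def)
  qed
qed

lemma enc_dec: "q < NN \<Longrightarrow> enc (dec q) = q"
proof -
  assume q: "q < NN"
  show ?thesis
  proof (cases "q < P * (b + 1)")
    case True
    have "q div (b + 1) * (b + 1) + q mod (b + 1) = q" by (rule div_mult_mod_eq)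
    thus ?thesis using True by (simp add: dec_def enc_def)
  next
    case False
    thus ?thesis using q by (auto simp: dec_def enc_def NN_def)
  qed
qed

lemma Dl_UU: "x \<in> UU \<Longrightarrow> Dl x a = Some y \<Longrightarrow> y \<in> UU"
  using P2 b2
  by (auto simp: Dl_def UU_def rot_lt split: st.splits if_splits)

lemma Dw_UU: "x \<in> UU \<Longrightarrow> Dw x w = Some y \<Longrightarrow> y \<in> UU"
proof (induction w arbitrary: x)
  case Nil thus ?case by simp
next
  case (Cons a w)
  then obtain z where z: "Dl x a = Some z" "Dw z w = Some y"
    by (auto split: option.splits)
  thus ?case using Cons Dl_UU by blast
qed

lemma pdfa: "is_pdfa NN 3 dd"
  unfolding is_pdfa_def
proof (intro allI conjI impI)
  fix q a :: nat assume h: "q < NN \<and> a < 3"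
  show "case dd q a of None \<Rightarrow> True | Some p \<Rightarrow> p < NN"
  proof (cases "Dl (dec q) a")
    case (Some y)
    hence "y \<in> UU" using Dl_UU dec_UU h by blast
    thus ?thesis using Some h enc_lt by (simp add: dd_def)
  qed (simp add: dd_def)
next
  fix q a :: nat assume "\<not> (q < NN \<and> a < 3)"
  thus "dd q a = None" unfolding dd_def by (rule if_not_P)
qed

lemma bridge: "x \<in> UU \<Longrightarrow> set w \<subseteq> {..<3} \<Longrightarrow> delta_word dd (enc x) w = map_option enc (Dw x w)"
proof (induction w arbitrary: x)
  case Nil thus ?case by simp
next
  case (Cons a w)
  have a3: "a < 3" and ws: "set w \<subseteq> {..<3}" using Cons.prems by auto
  have dd_eq: "dd (enc x) a = map_option enc (Dl x a)"
    using Cons.prems(1) a3 enc_lt dec_enc by (simp add: dd_def)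
  show ?case
  proof (cases "Dl x a")
    case None thus ?thesis using dd_eq by simp
  next
    case (Some y)
    hence "y \<in> UU" using Dl_UU Cons.prems by blast
    thus ?thesis using dd_eq Some Cons.IH ws by simp
  qed
qed

definition pos :: "nat \<Rightarrow> nat \<Rightarrow> nat" where "pos z j = (z + 1 + j) mod P"
definition symb :: "nat \<Rightarrow> nat \<Rightarrow> st" where "symb p s = (if s = b then Cs else D p s)"
definition elt :: "nat \<Rightarrow> (nat \<Rightarrow> nat) \<Rightarrow> nat \<Rightarrow> st" where "elt z d j = symb (pos z j) (d j)"
definition cfg :: "nat \<Rightarrow> (nat \<Rightarrow> nat) \<Rightarrow> st set" where
  "cfg z d = insert (D z b) (elt z d ` {..<P - 1})"
definition valid :: "nat \<Rightarrow> (nat \<Rightarrow> nat) \<Rightarrow> bool" where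
  "valid z d = (z < P \<and> (\<forall>j<P - 1. d j \<le> b \<and> (d j = b \<longrightarrow> pos z j = 0)))"

definition defd :: "st set \<Rightarrow> nat \<Rightarrow> bool" where "defd S a = (\<forall>x\<in>S. Dl x a \<noteq> None)"
definition img :: "st set \<Rightarrow> nat \<Rightarrow> st set" where "img S a = (\<lambda>x. the (Dl x a)) ` S"

lemma pos_alt: "z < P \<Longrightarrow> j < P - 1 \<Longrightarrow> pos z j = (if z + 1 + j < P then z + 1 + j else z + 1 + j - P)"
proof -
  assume a: "z < P" "j < P - 1"
  show ?thesis
  proof (cases "z + 1 + j < P")
    case True thus ?thesis by (simp add: pos_def)
  next
    case False
    hence "z + 1 + j = (z + 1 + j - P) + P" "z + 1 + j - P < P" using a by auto
    hence "(z + 1 + j) mod P = z + 1 + j - P" by (metis mod_add_self2 mod_less)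
    thus ?thesis using False by (simp add: pos_def)
  qed
qed

lemma pos_lt: "pos z j < P" using P2 by (simp add: pos_def)

lemma pos_0: "j < P - 1 \<Longrightarrow> pos 0 j = j + 1"
  using P2 by (simp add: pos_alt)

lemma pos_last: "j < P - 1 \<Longrightarrow> pos (P - 1) j = j"
  using P2 by (simp add: pos_alt)

lemma pos_ne: "z < P \<Longrightarrow> j < P - 1 \<Longrightarrow> pos z j \<noteq> z"
  by (simp add: pos_alt) linarith

lemma pos_zero_iff: "1 \<le> z \<Longrightarrow> z < P \<Longrightarrow> j < P - 1 \<Longrightarrow> (pos z j = 0) = (j = P - 1 - z)"
  by (auto simp: pos_alt)

lemma pos_one: "2 \<le> z \<Longrightarrow> z < P \<Longrightarrow> pos z (P - z) = 1"
  using P2 by (simp add: pos_alt)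

lemma pos_rot: "z < P \<Longrightarrow> j < P - 1 \<Longrightarrow> pos (rot z) j = rot (pos z j)"
  using P2 rot_lt[of z] by (auto simp: pos_alt rot_def)

lemma pos_range: "z < P \<Longrightarrow> insert z (pos z ` {..<P - 1}) = {..<P}"
proof
  assume z: "z < P"
  show "insert z (pos z ` {..<P - 1}) \<subseteq> {..<P}" using z pos_lt by auto
  show "{..<P} \<subseteq> insert z (pos z ` {..<P - 1})"
  proof
    fix p assume p: "p \<in> {..<P}"
    show "p \<in> insert z (pos z ` {..<P - 1})"
    proof (cases "p = z")
      case True thus ?thesis by simp
    next
      case False
      show ?thesis
      proof (cases "z < p")
        case True
        hence "p - z - 1 < P - 1" "pos z (p - z - 1) = p" using p z by (auto simp: pos_alt)
        thus ?thesis by (metis imageI insertI2 lessThan_iff)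
      next
        case f2: False
        hence "p + P - z - 1 < P - 1" "pos z (p + P - z - 1) = p" using p z False by (auto simp: pos_alt)
        thus ?thesis by (metis imageI insertI2 lessThan_iff)
      qed
    qed
  qed
qed

lemma img_cfg: "img (cfg z d) a = insert (the (Dl (D z b) a)) ((\<lambda>j. the (Dl (elt z d j) a)) ` {..<P - 1})"
  by (simp add: img_def cfg_def image_image)

lemma defd_cfg: "defd (cfg z d) a = (Dl (D z b) a \<noteq> None \<and> (\<forall>j<P - 1. Dl (elt z d j) a \<noteq> None))"
  by (auto simp: defd_def cfg_def)

definition Tpos :: "nat \<Rightarrow> st" where "Tpos p = (if p = 1 then D 1 b else D p 0)"

lemma cfg_T_form: "z < P \<Longrightarrow> (\<forall>j<P - 1. elt z d j = Tpos (pos z j)) \<Longrightarrow> D z b = Tpos z \<Longrightarrow> cfg z d = Tpos ` {..<P}"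
proof -
  assume a: "z < P" "\<forall>j<P - 1. elt z d j = Tpos (pos z j)" "D z b = Tpos z"
  have "cfg z d = insert (Tpos z) ((\<lambda>j. Tpos (pos z j)) ` {..<P - 1})"
    using a by (simp add: cfg_def)
  also have "\<dots> = Tpos ` insert z (pos z ` {..<P - 1})" by (simp add: image_image)
  also have "\<dots> = Tpos ` {..<P}" using pos_range a by simp
  finally show ?thesis .
qed

definition I0 :: "st set" where "I0 = cfg 1 (\<lambda>_. 0)"

lemma valid_I0: "valid 1 (\<lambda>_. 0)" using P2 b2 by (simp add: valid_def)

lemma I0_form: "I0 = Tpos ` {..<P}"
  unfolding I0_def
proof (rule cfg_T_form)
  show "1 < P" using P2 by simp
  show "\<forall>j<P - 1. elt 1 (\<lambda>_. 0) j = Tpos (pos 1 j)"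
    using b2 P2 pos_ne[of 1] by (simp add: elt_def symb_def Tpos_def)
  show "D 1 b = Tpos 1" by (simp add: Tpos_def)
qed

lemma T_cfg: "valid z d \<Longrightarrow> defd (cfg z d) 0 \<and> img (cfg z d) 0 = I0"
proof
  assume v: "valid z d"
  show "defd (cfg z d) 0" by (simp add: defd_def Dl_def)
  have "img (cfg z d) 0 = insert (Tpos z) ((\<lambda>j. Tpos (pos z j)) ` {..<P - 1})"
    unfolding img_cfg
  proof (intro arg_cong2[where f=insert] image_cong refl)
    show "the (Dl (D z b) 0) = Tpos z" by (simp add: Dl_def Tpos_def)
    fix j assume j: "j \<in> {..<P - 1}"
    show "the (Dl (elt z d j) 0) = Tpos (pos z j)"
    proof (cases "d j = b")
      case True
      hence "pos z j = 0" using v j by (simp add: valid_def)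
      thus ?thesis using True by (simp add: elt_def symb_def Dl_def Tpos_def)
    next
      case False thus ?thesis by (simp add: elt_def symb_def Dl_def Tpos_def)
    qed
  qed
  also have "\<dots> = Tpos ` insert z (pos z ` {..<P - 1})" by (simp add: image_image)
  also have "\<dots> = Tpos ` {..<P}" using pos_range v by (simp add: valid_def)
  finally show "img (cfg z d) 0 = I0" using I0_form by simp
qed

lemma R_cfg: "valid z d \<Longrightarrow> (\<forall>j<P - 1. d j \<noteq> b) \<Longrightarrow>
   defd (cfg z d) 1 \<and> img (cfg z d) 1 = cfg (rot z) d \<and> valid (rot z) d"
proof (intro conjI)
  assume v: "valid z d" and nc: "\<forall>j<P - 1. d j \<noteq> b"
  show "defd (cfg z d) 1" using nc by (simp add: defd_cfg Dl_def elt_def symb_def)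
  show "img (cfg z d) 1 = cfg (rot z) d"
  proof (unfold img_cfg, unfold cfg_def, intro arg_cong2[where f=insert] image_cong refl)
    show "the (Dl (D z b) 1) = D (rot z) b" by (simp add: Dl_def)
    fix j assume j: "j \<in> {..<P - 1}"
    thus "the (Dl (elt z d j) 1) = elt (rot z) d j"
      using nc v pos_rot[of z j] by (simp add: elt_def symb_def Dl_def valid_def)
  qed
  show "valid (rot z) d" using v nc rot_lt by (simp add: valid_def)
qed

lemma R_undef: "valid z d \<Longrightarrow> j < P - 1 \<Longrightarrow> d j = b \<Longrightarrow> \<not> defd (cfg z d) 1"
proof -
  assume j: "j < P - 1" and e: "d j = b"
  have "elt z d j = Cs" using e by (simp add: elt_def symb_def)
  hence "Cs \<in> cfg z d" using j unfolding cfg_def by (metis imageI insertI2 lessThan_iff)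
  moreover have "Dl Cs 1 = None" by (simp add: Dl_def)
  ultimately show ?thesis unfolding defd_def by blast
qed

lemma W_start: "valid 0 d \<Longrightarrow>
   defd (cfg 0 d) 2 \<and> img (cfg 0 d) 2 = cfg (P - 1) (d(0 := Suc (d 0))) \<and> valid (P - 1) (d(0 := Suc (d 0)))"
proof (intro conjI)
  assume v: "valid 0 d"
  have p1: "0 < P - 1" using P2 by simp
  have nb: "\<And>j. j < P - 1 \<Longrightarrow> d j \<noteq> b"
  proof
    fix j assume j: "j < P - 1" and e: "d j = b"
    hence "pos 0 j = 0" using v by (simp add: valid_def)
    thus False using pos_0[OF j] by simp
  qed
  have le: "\<And>j. j < P - 1 \<Longrightarrow> d j < b" using v nb by (fastforce simp: valid_def le_less)
  show "defd (cfg 0 d) 2"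
    unfolding defd_cfg using nb pos_0 by (auto simp: Dl_def elt_def symb_def)
  show "img (cfg 0 d) 2 = cfg (P - 1) (d(0 := Suc (d 0)))"
  proof (unfold img_cfg, unfold cfg_def, intro arg_cong2[where f=insert] image_cong refl)
    show "the (Dl (D 0 b) 2) = D (P - 1) b" by (simp add: Dl_def)
    fix j assume j: "j \<in> {..<P - 1}"
    show "the (Dl (elt 0 d j) 2) = elt (P - 1) (d(0 := Suc (d 0))) j"
    proof (cases "j = 0")
      case True
      thus ?thesis using le[of 0] p1 pos_0[of 0] pos_last[of 0]
        by (auto simp: Dl_def elt_def symb_def)
    next
      case False
      thus ?thesis using j nb[of j] pos_0[of j] pos_last[of j]
        by (auto simp: Dl_def elt_def symb_def)
    qed
  qed
  show "valid (P - 1) (d(0 := Suc (d 0)))"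
    using v le p1 pos_last nb by (auto simp: valid_def Suc_le_eq)
qed

lemma W_carry:
  assumes v: "valid z d" and z2: "2 \<le> z" and c: "d (P - 1 - z) = b"
  shows "defd (cfg z d) 2 \<and>
    img (cfg z d) 2 = cfg (z - 1) (d(P - 1 - z := 0, P - z := Suc (d (P - z)))) \<and>
    valid (z - 1) (d(P - 1 - z := 0, P - z := Suc (d (P - z))))"
proof (intro conjI)
  have zP: "z < P" using v by (simp add: valid_def)
  let ?j0 = "P - 1 - z"
  have j0: "?j0 < P - 1" "Suc ?j0 = P - z" "P - z < P - 1" using z2 zP by auto
  have p0: "pos z ?j0 = 0" using pos_zero_iff[of z ?j0] z2 zP j0 by simp
  have p1: "pos z (P - z) = 1" using pos_one z2 zP by simp
  have nb: "\<And>j. j < P - 1 \<Longrightarrow> j \<noteq> ?j0 \<Longrightarrow> d j \<noteq> b"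
    using v pos_zero_iff[of z] z2 zP by (auto simp: valid_def)
  have le: "\<And>j. j < P - 1 \<Longrightarrow> d j \<le> b" using v by (simp add: valid_def)
  have posge2: "\<And>j. j < P - 1 \<Longrightarrow> j \<noteq> ?j0 \<Longrightarrow> j \<noteq> P - z \<Longrightarrow> 2 \<le> pos z j"
  proof -
    fix j assume "j < P - 1" "j \<noteq> ?j0" "j \<noteq> P - z"
    thus "2 \<le> pos z j" using zP z2 by (auto simp: pos_alt)
  qed
  have prot: "\<And>j. j < P - 1 \<Longrightarrow> pos (z - 1) j = rot (pos z j)"
    using pos_rot[of z] zP z2 by (simp add: rot_def)
  show "defd (cfg z d) 2"
    unfolding defd_cfg
  proof (intro conjI allI impI)
    show "Dl (D z b) 2 \<noteq> None" using z2 by (simp add: Dl_def)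
    fix j assume j: "j < P - 1"
    show "Dl (elt z d j) 2 \<noteq> None"
    proof (cases "j = ?j0")
      case True thus ?thesis using c by (simp add: elt_def symb_def Dl_def)
    next
      case False
      thus ?thesis using nb[OF j False] posge2[OF j False] p1
        by (cases "j = P - z") (auto simp: elt_def symb_def Dl_def)
    qed
  qed
  show "img (cfg z d) 2 = cfg (z - 1) (d(P - 1 - z := 0, P - z := Suc (d (P - z))))"
  proof (unfold img_cfg, unfold cfg_def, intro arg_cong2[where f=insert] image_cong refl)
    show "the (Dl (D z b) 2) = D (z - 1) b" using z2 by (simp add: Dl_def)
    fix j assume j: "j \<in> {..<P - 1}"
    hence j': "j < P - 1" by simp
    show "the (Dl (elt z d j) 2) = elt (z - 1) (d(P - 1 - z := 0, P - z := Suc (d (P - z)))) j"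
    proof (cases "j = ?j0")
      case True
      have "pos (z - 1) j = P - 1" using prot[OF j'] True p0 by (simp add: rot_def)
      thus ?thesis using True c j0 b2 by (simp add: elt_def symb_def Dl_def)
    next
      case False
      show ?thesis
      proof (cases "j = P - z")
        case True
        have "pos (z - 1) j = 0" using prot[OF j'] True p1 by (simp add: rot_def)
        moreover have "d (P - z) < b" using nb[OF j' False] le[OF j'] True by simp
        ultimately show ?thesis using True p1 j0 by (auto simp: elt_def symb_def Dl_def)
      next
        case f2: False
        have g: "2 \<le> pos z j" using posge2[OF j' False f2] .
        hence "pos (z - 1) j = pos z j - 1" using prot[OF j'] by (simp add: rot_def)
        thus ?thesis using g nb[OF j' False] False f2 by (simp add: elt_def symb_def Dl_def)
      qed
    qed
  qed
  show "valid (z - 1) (d(P - 1 - z := 0, P - z := Suc (d (P - z))))"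
    unfolding valid_def
  proof (intro conjI allI impI)
    show "z - 1 < P" using zP by simp
    fix j assume j: "j < P - 1"
    show "(d(P - 1 - z := 0, P - z := Suc (d (P - z)))) j \<le> b"
      using le[OF j] nb[of "P - z"] le[of "P - z"] j0 by (auto simp: Suc_le_eq le_less)
    assume e: "(d(P - 1 - z := 0, P - z := Suc (d (P - z)))) j = b"
    have "j = P - z"
    proof (rule ccontr)
      assume "j \<noteq> P - z"
      hence "j \<noteq> ?j0" using e b2 by auto
      thus False using e nb[OF j] \<open>j \<noteq> P - z\<close> by auto
    qed
    thus "pos (z - 1) j = 0" using prot[OF j] p1 by (simp add: rot_def)
  qed
qed

lemma W_undef: "valid z d \<Longrightarrow> z \<noteq> 0 \<Longrightarrow> d (P - 1 - z) \<noteq> b \<Longrightarrow> \<not> defd (cfg z d) 2"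
proof
  assume v: "valid z d" and z: "z \<noteq> 0" and c: "d (P - 1 - z) \<noteq> b" and df: "defd (cfg z d) 2"
  have zP: "z < P" using v by (simp add: valid_def)
  have j: "P - 1 - z < P - 1" using z zP by simp
  have "pos z (P - 1 - z) = 0" using pos_zero_iff[of z] z zP j by simp
  hence "Dl (elt z d (P - 1 - z)) 2 = None" using c by (simp add: elt_def symb_def Dl_def)
  moreover have "Dl (elt z d (P - 1 - z)) 2 \<noteq> None" using df j unfolding defd_cfg by blast
  ultimately show False by simp
qed

lemma cfg_two: "valid z d \<Longrightarrow> D z b \<in> cfg z d \<and> elt z d 0 \<in> cfg z d \<and> elt z d 0 \<noteq> D z b"
proof (intro conjI)
  assume v: "valid z d"
  show "D z b \<in> cfg z d" by (simp add: cfg_def)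
  have "0 < P - 1" using P2 by simp
  thus "elt z d 0 \<in> cfg z d" unfolding cfg_def by (metis imageI insertI2 lessThan_iff)
  have "pos z 0 \<noteq> z" using pos_ne[of z 0] v P2 by (simp add: valid_def)
  thus "elt z d 0 \<noteq> D z b" by (simp add: elt_def symb_def)
qed

definition Phi :: "(nat \<Rightarrow> nat) \<Rightarrow> nat" where "Phi d = (\<Sum>j<P - 1. d j * b ^ j)"
definition psi :: "nat \<Rightarrow> (nat \<Rightarrow> nat) \<Rightarrow> nat" where "psi z d = P * Phi d + (P - 1 - z)"

lemma Phi_upd: "j < P - 1 \<Longrightarrow> Phi (d(j := x)) + d j * b ^ j = Phi d + x * b ^ j"
proof -
  assume j: "j < P - 1"
  have f: "finite {..<P - 1}" "j \<in> {..<P - 1}" using j by auto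
  have A: "Phi d = d j * b ^ j + (\<Sum>i\<in>{..<P - 1} - {j}. d i * b ^ i)"
    unfolding Phi_def using sum.remove[OF f] by simp
  have B: "Phi (d(j := x)) = x * b ^ j + (\<Sum>i\<in>{..<P - 1} - {j}. (d(j := x)) i * b ^ i)"
    unfolding Phi_def using sum.remove[OF f, of "\<lambda>i. (d(j := x)) i * b ^ i"] by simp
  have C: "(\<Sum>i\<in>{..<P - 1} - {j}. (d(j := x)) i * b ^ i) = (\<Sum>i\<in>{..<P - 1} - {j}. d i * b ^ i)"
    by (rule sum.cong) auto
  show ?thesis using A B C by simp
qed

lemma Phi_start: "Phi (d(0 := Suc (d 0))) = Phi d + 1"
  using Phi_upd[of 0 d "Suc (d 0)"] P2 by simp

lemma Phi_carry:
  assumes j: "Suc j0 < P - 1" and c: "d j0 = b"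
  shows "Phi (d(j0 := 0, Suc j0 := Suc (d (Suc j0)))) = Phi d"
proof -
  let ?d1 = "d(j0 := 0)"
  have j0: "j0 < P - 1" using j by simp
  have 1: "Phi ?d1 + d j0 * b ^ j0 = Phi d" using Phi_upd[OF j0, of d 0] by simp
  have 2: "Phi (?d1(Suc j0 := Suc (d (Suc j0)))) + ?d1 (Suc j0) * b ^ Suc j0
           = Phi ?d1 + Suc (d (Suc j0)) * b ^ Suc j0"
    using Phi_upd[OF j, of ?d1] by simp
  have 3: "?d1 (Suc j0) = d (Suc j0)" by simp
  have 4: "d j0 * b ^ j0 = b ^ Suc j0" using c by simp
  show ?thesis using 1 2 3 4 by simp
qed

lemma Phi_ge: "j < P - 1 \<Longrightarrow> d j * b ^ j \<le> Phi d"
  unfolding Phi_def by (rule member_le_sum) auto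

lemma step_lemma:
  assumes "\<forall>x\<in>S. Dw x (a # w) = Some y"
  shows "defd S a \<and> (\<forall>x'\<in>img S a. Dw x' w = Some y)"
proof
  show "defd S a" unfolding defd_def
  proof
    fix x assume "x \<in> S"
    thus "Dl x a \<noteq> None" using assms by (cases "Dl x a") auto
  qed
  show "\<forall>x'\<in>img S a. Dw x' w = Some y"
  proof
    fix x' assume "x' \<in> img S a"
    then obtain x where x: "x \<in> S" "x' = the (Dl x a)" by (auto simp: img_def)
    then obtain v where v: "Dl x a = Some v" using assms by (cases "Dl x a") auto
    have "Dw x (a # w) = Some y" using assms x(1) by blast
    thus "Dw x' w = Some y" using v x(2) by simp
  qed
qed

lemma nodef3: "3 \<le> a \<Longrightarrow> S \<noteq> {} \<Longrightarrow> \<not> defd S a"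
  by (auto simp: defd_def Dl_def)

lemma lb: "valid z d \<Longrightarrow> \<forall>x\<in>cfg z d. Dw x w = Some y \<Longrightarrow>
   P * b ^ (P - 1) + P \<le> length w + max (psi z d) (P - 2)"
proof (induction w arbitrary: z d)
  case Nil
  have "D z b = y" "elt z d 0 = y" using Nil cfg_two[OF Nil.prems(1)] by auto
  thus ?case using cfg_two[OF Nil.prems(1)] by simp
next
  case (Cons a w)
  have v: "valid z d" using Cons.prems(1) .
  have zP: "z < P" using v by (simp add: valid_def)
  have st: "defd (cfg z d) a" "\<forall>x'\<in>img (cfg z d) a. Dw x' w = Some y"
    using step_lemma[OF Cons.prems(2)] by auto
  consider "a = 0" | "a = 1" | "a = 2" | "3 \<le> a" by linarith
  thus ?case
  proof cases
    case 1
    have "img (cfg z d) a = I0" using T_cfg[OF v] 1 by simp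
    hence "P * b ^ (P - 1) + P \<le> length w + max (psi 1 (\<lambda>_. 0)) (P - 2)"
      using Cons.IH[OF valid_I0] st(2) unfolding I0_def by simp
    moreover have "psi 1 (\<lambda>_. 0) = P - 2" by (simp add: psi_def Phi_def)
    ultimately show ?thesis by simp
  next
    case 2
    have nc: "\<forall>j<P - 1. d j \<noteq> b" using R_undef[OF v] st(1) 2 by blast
    have R: "img (cfg z d) 1 = cfg (rot z) d" "valid (rot z) d" using R_cfg[OF v nc] by auto
    have IH: "P * b ^ (P - 1) + P \<le> length w + max (psi (rot z) d) (P - 2)"
      using Cons.IH[OF R(2)] st(2) R(1) 2 by simp
    have "psi (rot z) d \<le> psi z d + 1" using zP by (auto simp: psi_def rot_def)
    thus ?thesis using IH by simp
  next
    case 3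
    show ?thesis
    proof (cases "z = 0")
      case True
      have W: "img (cfg z d) 2 = cfg (P - 1) (d(0 := Suc (d 0)))" "valid (P - 1) (d(0 := Suc (d 0)))"
        using W_start v True by auto
      have H': "\<forall>x'\<in>cfg (P - 1) (d(0 := Suc (d 0))). Dw x' w = Some y" using st(2) W(1) 3 by simp
      have IH: "P * b ^ (P - 1) + P \<le> length w + max (psi (P - 1) (d(0 := Suc (d 0)))) (P - 2)"
        using Cons.IH[OF W(2) H'] .
      have "psi (P - 1) (d(0 := Suc (d 0))) = psi z d + 1"
        using True P2 Phi_start[of d] by (simp add: psi_def)
      thus ?thesis using IH by simp
    next
      case False
      have c: "d (P - 1 - z) = b" using W_undef[OF v False] st(1) 3 by blast
      show ?thesis
      proof (cases "z = 1")
        case True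
        have pp: "P - 2 < P - 1" using P2 by simp
        have c2: "d (P - 2) = b" using c True by (simp add: numeral_2_eq_2)
        have "pos 1 (P - 2) = 0" using pos_zero_iff[of 1 "P - 2"] P2 by (simp add: numeral_2_eq_2)
        hence "elt 1 d (P - 2) = Cs" using c2 by (simp add: elt_def symb_def)
        hence Cin: "Cs \<in> cfg z d" using pp True unfolding cfg_def by (metis imageI insertI2 lessThan_iff)
        have Din: "D 1 b \<in> cfg z d" using True by (simp add: cfg_def)
        have wne: "w \<noteq> []"
        proof
          assume "w = []"
          hence "Dw Cs [a] = Some y" "Dw (D 1 b) [a] = Some y"
            using Cons.prems(2) Cin Din by auto
          thus False using 3 by (simp add: Dl_def)
        qed
        have "b ^ (P - 1) \<le> Phi d"
        proof -
          have "d (P - 2) * b ^ (P - 2) \<le> Phi d" using Phi_ge[OF pp] .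
          moreover have "d (P - 2) * b ^ (P - 2) = b ^ (P - 1)"
            using c2 P2 by (metis Suc_diff_Suc Suc_1 lessI less_le_trans numeral_2_eq_2 power_Suc)
          ultimately show ?thesis by simp
        qed
        hence "P * b ^ (P - 1) \<le> P * Phi d" by (rule mult_le_mono2)
        hence "P * b ^ (P - 1) + (P - 2) \<le> psi z d" using True by (simp add: psi_def numeral_2_eq_2)
        moreover have "1 \<le> length w" using wne by (cases w) auto
        ultimately show ?thesis by simp
      next
        case f2: False
        have z2: "2 \<le> z" using False f2 by simp
        let ?d' = "d(P - 1 - z := 0, P - z := Suc (d (P - z)))"
        have W: "img (cfg z d) 2 = cfg (z - 1) ?d'" "valid (z - 1) ?d'"
          using W_carry[OF v z2 c] by auto
        have H': "\<forall>x'\<in>cfg (z - 1) ?d'. Dw x' w = Some y" using st(2) W(1) 3 by simp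
        have IH: "P * b ^ (P - 1) + P \<le> length w + max (psi (z - 1) ?d') (P - 2)"
          using Cons.IH[OF W(2) H'] .
        have e: "Suc (P - 1 - z) = P - z" "Suc (P - 1 - z) < P - 1" using z2 zP by auto
        have "Phi ?d' = Phi d" using Phi_carry[of "P - 1 - z" d, OF e(2) c] e(1) by simp
        hence "psi (z - 1) ?d' = psi z d + 1" using z2 zP by (simp add: psi_def)
        thus ?thesis using IH by (simp add: max_def split: if_splits)
      qed
    qed
  next
    case 4
    have "cfg z d \<noteq> {}" by (simp add: cfg_def)
    thus ?thesis using nodef3[OF 4] st(1) by blast
  qed
qed

lemma UU_T: "defd UU 0 \<and> img UU 0 = I0"
proof
  show "defd UU 0" by (simp add: defd_def Dl_def)
  have "img UU 0 = Tpos ` {..<P}"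
  proof
    show "img UU 0 \<subseteq> Tpos ` {..<P}"
    proof
      fix y assume "y \<in> img UU 0"
      then obtain x where x: "x \<in> UU" "y = the (Dl x 0)" by (auto simp: img_def)
      show "y \<in> Tpos ` {..<P}"
      proof (cases x)
        case (D p s)
        hence "p < P" using x by (simp add: UU_def)
        moreover have "y = Tpos p" using x D by (simp add: Dl_def Tpos_def)
        ultimately show ?thesis by simp
      next
        case Cs
        hence "y = Tpos 0" using x by (simp add: Dl_def Tpos_def)
        thus ?thesis using P2 by simp
      next
        case Zp
        hence "y = Tpos 1" using x by (simp add: Dl_def Tpos_def)
        thus ?thesis using P2 by simp
      next
        case (Pd i)
        hence "y = Tpos 1" using x by (simp add: Dl_def Tpos_def)
        thus ?thesis using P2 by simp
      qed
    qed
    show "Tpos ` {..<P} \<subseteq> img UU 0"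
    proof
      fix y assume "y \<in> Tpos ` {..<P}"
      then obtain p where p: "p < P" "y = Tpos p" by auto
      have "D p 0 \<in> UU" using p by (simp add: UU_def)
      moreover have "the (Dl (D p 0) 0) = y" using p by (simp add: Dl_def Tpos_def)
      ultimately show "y \<in> img UU 0" unfolding img_def by (metis imageI)
    qed
  qed
  thus "img UU 0 = I0" using I0_form by simp
qed

lemma lower_abs: "\<forall>x\<in>UU. Dw x w = Some y \<Longrightarrow> P * b ^ (P - 1) + 3 \<le> length w"
proof (cases w)
  case Nil
  assume h: "\<forall>x\<in>UU. Dw x w = Some y"
  have "Cs \<in> UU" "Zp \<in> UU" by (auto simp: UU_def)
  hence "Dw Cs w = Some y" "Dw Zp w = Some y" using h by blast+
  thus ?thesis using Nil by simp
next
  case (Cons a w')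
  assume h: "\<forall>x\<in>UU. Dw x w = Some y"
  have st: "defd UU a" "\<forall>x'\<in>img UU a. Dw x' w' = Some y" using step_lemma h Cons by auto
  have a0: "a = 0"
  proof (rule ccontr)
    assume "a \<noteq> 0"
    moreover have "Cs \<in> UU" "D 0 0 \<in> UU" using P2 by (auto simp: UU_def)
    moreover have "Dl Cs 1 = None" "Dl (D 0 0) 2 = None" using b2 by (auto simp: Dl_def)
    moreover have "UU \<noteq> {}" using calculation by auto
    ultimately show False using st(1) nodef3[of a UU] unfolding defd_def
      by (metis One_nat_def Suc_1 less_Suc_eq linorder_not_le numeral_3_eq_3 not_less0)
  qed
  hence "\<forall>x'\<in>cfg 1 (\<lambda>_. 0). Dw x' w' = Some y" using st(2) UU_T unfolding I0_def by simp
  hence "P * b ^ (P - 1) + P \<le> length w' + max (psi 1 (\<lambda>_. 0)) (P - 2)"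
    using lb[OF valid_I0] by blast
  moreover have "psi 1 (\<lambda>_. 0) = P - 2" by (simp add: psi_def Phi_def)
  ultimately show ?thesis using Cons P2 by simp
qed

lemma lower: "carefully_sync NN 3 dd w \<Longrightarrow> P * b ^ (P - 1) + 3 \<le> length w"
proof -
  assume cs: "carefully_sync NN 3 dd w"
  then obtain q where ws: "set w \<subseteq> {..<3}" and q: "\<forall>p<NN. delta_word dd p w = Some q"
    by (auto simp: carefully_sync_def)
  have "\<forall>x\<in>UU. Dw x w = Some (dec q)"
  proof
    fix x assume x: "x \<in> UU"
    have "delta_word dd (enc x) w = Some q" using q enc_lt[OF x] by simp
    hence "map_option enc (Dw x w) = Some q" using bridge[OF x ws] by simp
    then obtain y where y: "Dw x w = Some y" "enc y = q" by auto
    have "y \<in> UU" using Dw_UU[OF x y(1)] .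
    hence "dec q = y" using y(2) dec_enc by auto
    thus "Dw x w = Some (dec q)" using y by simp
  qed
  thus ?thesis using lower_abs by blast
qed

definition reach :: "st set \<Rightarrow> nat list \<Rightarrow> st set \<Rightarrow> bool" where
  "reach S w S' = (set w \<subseteq> {..<3} \<and> (\<forall>x\<in>S. Dw x w \<noteq> None) \<and> S' = (\<lambda>x. the (Dw x w)) ` S)"

lemma Dw_append: "Dw x (u @ v) = (case Dw x u of None \<Rightarrow> None | Some y \<Rightarrow> Dw y v)"
  by (induction u arbitrary: x) (auto split: option.splits)

lemma reach_Nil: "reach S [] S" by (simp add: reach_def)

lemma Dw_single: "Dw x [a] = Dl x a" by (cases "Dl x a") auto

lemma reach_step: "a < 3 \<Longrightarrow> defd S a \<Longrightarrow> reach S [a] (img S a)"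
  unfolding reach_def defd_def img_def Dw_single by auto

lemma reach_trans: "reach S u S1 \<Longrightarrow> reach S1 v S2 \<Longrightarrow> reach S (u @ v) S2"
proof -
  assume r1: "reach S u S1" and r2: "reach S1 v S2"
  have ws: "set (u @ v) \<subseteq> {..<3}" using r1 r2 by (simp add: reach_def)
  have d: "\<forall>x\<in>S. Dw x (u @ v) \<noteq> None \<and> the (Dw x (u @ v)) = the (Dw (the (Dw x u)) v)"
  proof
    fix x assume x: "x \<in> S"
    then obtain y where y: "Dw x u = Some y" using r1 by (auto simp: reach_def)
    hence "y \<in> S1" using r1 x by (force simp: reach_def)
    hence "Dw y v \<noteq> None" using r2 by (simp add: reach_def)
    thus "Dw x (u @ v) \<noteq> None \<and> the (Dw x (u @ v)) = the (Dw (the (Dw x u)) v)"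
      using y by (simp add: Dw_append)
  qed
  have "S2 = (\<lambda>y. the (Dw y v)) ` ((\<lambda>x. the (Dw x u)) ` S)" using r1 r2 by (simp add: reach_def)
  also have "\<dots> = (\<lambda>x. the (Dw x (u @ v))) ` S" using d by (simp add: image_image)
  finally show ?thesis using ws d by (simp add: reach_def)
qed

lemma reach_ex_trans: "\<exists>u. reach S u S1 \<Longrightarrow> \<exists>v. reach S1 v S2 \<Longrightarrow> \<exists>w. reach S w S2"
  using reach_trans by blast

lemma valid0: "valid 0 d = (\<forall>j<P - 1. d j < b)"
  using pos_0 P2 by (auto simp: valid_def le_less)

lemma R_iter: "valid z d \<Longrightarrow> \<forall>j<P - 1. d j \<noteq> b \<Longrightarrow> m \<le> z \<Longrightarrow> \<exists>w. reach (cfg z d) w (cfg (z - m) d)"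
proof (induction m arbitrary: z)
  case 0 thus ?case using reach_Nil by auto
next
  case (Suc m)
  have R: "defd (cfg z d) 1" "img (cfg z d) 1 = cfg (rot z) d" "valid (rot z) d"
    using R_cfg[OF Suc.prems(1,2)] by auto
  have rz: "rot z = z - 1" using Suc.prems(3) by (simp add: rot_def)
  have "\<exists>w. reach (cfg (z - 1) d) w (cfg (z - 1 - m) d)"
    using Suc.IH[of "z - 1"] R(3) rz Suc.prems by simp
  moreover have "reach (cfg z d) [1] (cfg (z - 1) d)" using reach_step[OF _ R(1)] R(2) rz by simp
  ultimately show ?case using reach_ex_trans by (metis diff_Suc_eq_diff_pred)
qed

definition ee :: "(nat \<Rightarrow> nat) \<Rightarrow> nat \<Rightarrow> nat \<Rightarrow> nat" where
  "ee d i = (\<lambda>j. if j < i then 0 else if j = i then Suc (d i) else d j)"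

lemma chain: "i \<le> P - 2 \<Longrightarrow> \<forall>j<i. d j = b - 1 \<Longrightarrow> valid 0 d \<Longrightarrow>
   (\<exists>w. reach (cfg 0 d) w (cfg (P - 1 - i) (ee d i))) \<and> valid (P - 1 - i) (ee d i)"
proof (induction i)
  case 0
  have W: "defd (cfg 0 d) 2" "img (cfg 0 d) 2 = cfg (P - 1) (d(0 := Suc (d 0)))"
    "valid (P - 1) (d(0 := Suc (d 0)))" using W_start[OF 0(3)] by auto
  have e: "ee d 0 = d(0 := Suc (d 0))" by (auto simp: ee_def)
  have r: "reach (cfg 0 d) [2] (img (cfg 0 d) 2)" by (rule reach_step) (use W(1) in auto)
  hence "reach (cfg 0 d) [2] (cfg (P - 1 - 0) (ee d 0))" using W(2) e by (metis diff_zero)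
  thus ?case using W(3) e by (metis diff_zero)
next
  case (Suc i)
  have IH: "(\<exists>w. reach (cfg 0 d) w (cfg (P - 1 - i) (ee d i)))" "valid (P - 1 - i) (ee d i)"
    using Suc by auto
  let ?z = "P - 1 - i"
  have z2: "2 \<le> ?z" using Suc.prems(1) by simp
  have di: "d i = b - 1" using Suc.prems(2) by simp
  have c: "ee d i (P - 1 - ?z) = b" using di b2 z2 by (simp add: ee_def)
  have W: "defd (cfg ?z (ee d i)) 2"
    "img (cfg ?z (ee d i)) 2 = cfg (?z - 1) ((ee d i)(P - 1 - ?z := 0, P - ?z := Suc (ee d i (P - ?z))))"
    "valid (?z - 1) ((ee d i)(P - 1 - ?z := 0, P - ?z := Suc (ee d i (P - ?z))))"
    using W_carry[OF IH(2) z2 c] by auto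
  have e: "(ee d i)(P - 1 - ?z := 0, P - ?z := Suc (ee d i (P - ?z))) = ee d (Suc i)"
    using z2 by (auto simp: ee_def)
  have z': "?z - 1 = P - 1 - Suc i" by simp
  have "reach (cfg ?z (ee d i)) [2] (cfg (P - 1 - Suc i) (ee d (Suc i)))"
    using reach_step[OF _ W(1)] W(2) e z' by simp
  thus ?case using IH(1) reach_ex_trans W(3) e z' by metis
qed

lemma inc: "j0 < P - 1 \<Longrightarrow> \<forall>j<j0. d j = b - 1 \<Longrightarrow> d j0 < b - 1 \<Longrightarrow> valid 0 d \<Longrightarrow>
   \<exists>w. reach (cfg 0 d) w (cfg 0 (ee d j0))"
proof -
  assume a: "j0 < P - 1" "\<forall>j<j0. d j = b - 1" "d j0 < b - 1" "valid 0 d"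
  have c: "(\<exists>w. reach (cfg 0 d) w (cfg (P - 1 - j0) (ee d j0)))" "valid (P - 1 - j0) (ee d j0)"
    using chain[of j0 d] a by auto
  have nc: "\<forall>j<P - 1. ee d j0 j \<noteq> b"
    using a(3,4) b2 by (auto simp: ee_def valid0)
  have "\<exists>w. reach (cfg (P - 1 - j0) (ee d j0)) w (cfg (P - 1 - j0 - (P - 1 - j0)) (ee d j0))"
    using R_iter[OF c(2) nc] by blast
  thus ?thesis using c(1) reach_ex_trans by simp
qed

lemma count: "m \<le> P - 1 \<Longrightarrow> valid 0 d \<Longrightarrow> \<forall>j<m. d j = 0 \<Longrightarrow>
   \<exists>w. reach (cfg 0 d) w (cfg 0 (\<lambda>j. if j < m then b - 1 else d j))"
proof (induction m arbitrary: d)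
  case 0 thus ?case using reach_Nil by auto
next
  case (Suc m)
  note oIH = Suc.IH
  note oprems = Suc.prems
  let ?g = "\<lambda>c j. if j < m then b - 1 else if j = m then c else d j"
  have m: "m < P - 1" using Suc.prems(1) by simp
  have dlt: "\<forall>j<P - 1. d j < b" using Suc.prems(2) valid0 by simp
  have inner: "\<And>c. c \<le> b - 1 \<Longrightarrow> \<exists>w. reach (cfg 0 d) w (cfg 0 (?g c))"
  proof -
    fix c show "c \<le> b - 1 \<Longrightarrow> \<exists>w. reach (cfg 0 d) w (cfg 0 (?g c))"
    proof (induction c)
      case 0
      have "?g 0 = (\<lambda>j. if j < m then b - 1 else d j)" using Suc.prems(3) by auto
      thus ?case using Suc.IH[of d] Suc.prems by simp
    next
      case (Suc c)
      have r1: "\<exists>w. reach (cfg 0 d) w (cfg 0 (?g c))" using Suc by simp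
      have vg: "valid 0 (?g c)" using dlt Suc.prems b2 by (auto simp: valid0)
      have r2: "\<exists>w. reach (cfg 0 (?g c)) w (cfg 0 (ee (?g c) m))"
        by (rule inc) (use m Suc.prems vg in auto)
      let ?h = "ee (?g c) m"
      have vh: "valid 0 ?h" using dlt Suc.prems b2 by (auto simp: valid0 ee_def)
      have h0: "\<forall>j<m. ?h j = 0" by (simp add: ee_def)
      have mle: "m \<le> P - 1" using m by simp
      have r3: "\<exists>w. reach (cfg 0 ?h) w (cfg 0 (\<lambda>j. if j < m then b - 1 else ?h j))"
        using oIH[of ?h, OF mle vh h0] .
      have eq: "(\<lambda>j. if j < m then b - 1 else ?h j) = ?g (Suc c)" by (auto simp: ee_def)
      obtain w1 where w1: "reach (cfg 0 d) w1 (cfg 0 (?g c))" using r1 by blast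
      obtain w2 where w2: "reach (cfg 0 (?g c)) w2 (cfg 0 ?h)" using r2 by blast
      obtain w3 where w3: "reach (cfg 0 ?h) w3 (cfg 0 (?g (Suc c)))" using r3 eq by auto
      show ?case using reach_trans[OF reach_trans[OF w1 w2] w3] by blast
    qed
  qed
  have "?g (b - 1) = (\<lambda>j. if j < Suc m then b - 1 else d j)" by auto
  thus ?case using inner[of "b - 1"] by simp
qed

lemma over_each:
  assumes ob: "Ov (P - 2) = b" and oz: "\<forall>j<P - 2. Ov j = 0" and j: "j < P - 1"
  shows "Dl (elt 1 Ov j) 2 = Some (D (Suc j) 0)"
proof (cases "j < P - 2")
  case True
  have p: "pos 1 j = j + 2" using True j by (simp add: pos_alt)
  have o: "Ov j = 0" using oz True by blast
  have "elt 1 Ov j = D (j + 2) 0" using p o b2 by (simp add: elt_def symb_def)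
  thus ?thesis by (simp add: Dl_def)
next
  case False
  hence jj: "j = P - 2" using j by simp
  have "pos 1 j = 0" using jj P2 by (simp add: pos_alt)
  hence e: "elt 1 Ov j = Cs" using jj ob by (simp add: elt_def symb_def)
  have "Dl Cs 2 = Some (D (P - 1) 0)" by (simp add: Dl_def)
  moreover have "P - 1 = Suc j" using jj P2 by simp
  ultimately show ?thesis using e by simp
qed

lemma over_img:
  assumes v: "valid 1 Ov" and ob: "Ov (P - 2) = b" and oz: "\<forall>j<P - 2. Ov j = 0"
  shows "defd (cfg 1 Ov) 2 \<and> img (cfg 1 Ov) 2 = insert Zp ((\<lambda>j. D (Suc j) 0) ` {..<P - 1})"
proof -
  have d1: "Dl (D 1 b) 2 = Some Zp" by (simp add: Dl_def)
  have D1: "defd (cfg 1 Ov) 2"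
    unfolding defd_cfg using d1 over_each[OF ob oz] by simp
  have imgeq: "(\<lambda>x. the (Dl (elt 1 Ov x) 2)) ` {..<P - 1} = (\<lambda>x. D (Suc x) 0) ` {..<P - 1}"
  proof (rule image_cong[OF refl])
    fix x assume "x \<in> {..<P - 1}"
    hence "x < P - 1" by (rule lessThan_iff[THEN iffD1])
    show "the (Dl (elt 1 Ov x) 2) = D (Suc x) 0"
      by (simp only: over_each[OF ob oz \<open>x < P - 1\<close>] option.sel)
  qed
  have "img (cfg 1 Ov) 2 = insert Zp ((\<lambda>j. D (Suc j) 0) ` {..<P - 1})"
    unfolding img_cfg d1 option.sel imgeq by (rule refl)
  thus ?thesis using D1 by blast
qed

definition EE :: "nat \<Rightarrow> st set" where "EE m = insert (D 1 b) ((\<lambda>p. D p 0) ` {2..m})"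

lemma T_D: "Dl (D p s) 0 = Some (if p = 1 then D 1 b else D p 0)" by (simp add: Dl_def)
lemma T_Zp: "Dl Zp 0 = Some (D 1 b)" by (simp add: Dl_def)
lemma W_D2: "2 \<le> p \<Longrightarrow> Dl (D p s) 2 = Some (D (p - 1) s)" by (simp add: Dl_def)
lemma W_D1b: "Dl (D 1 b) 2 = Some Zp" by (simp add: Dl_def)
lemma defd0: "defd S 0" by (simp add: defd_def Dl_def)
lemma img_ins: "img (insert x (f ` A)) a = insert (the (Dl x a)) ((\<lambda>y. the (Dl (f y) a)) ` A)"
  by (simp add: img_def image_image)

lemma after_over: "defd (insert Zp ((\<lambda>j. D (Suc j) 0) ` {..<P - 1})) 0 \<and>
   img (insert Zp ((\<lambda>j. D (Suc j) 0) ` {..<P - 1})) 0 = EE (P - 1)"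
proof
  show "defd (insert Zp ((\<lambda>j. D (Suc j) 0) ` {..<P - 1})) 0" by (rule defd0)
  have "img (insert Zp ((\<lambda>j. D (Suc j) 0) ` {..<P - 1})) 0
        = insert (D 1 b) ((\<lambda>j. if Suc j = 1 then D 1 b else D (Suc j) 0) ` {..<P - 1})"
    proof -
      have a: "img (insert Zp ((\<lambda>j. D (Suc j) 0) ` {..<P - 1})) 0 =
          insert (the (Dl Zp 0)) ((\<lambda>y. the (Dl (D (Suc y) 0) 0)) ` {..<P - 1})"
        using img_ins[of Zp "\<lambda>j. D (Suc j) 0" "{..<P - 1}" 0] by simp
      have b: "(\<lambda>y. the (Dl (D (Suc y) 0) 0)) ` {..<P - 1} = (\<lambda>j. if Suc j = 1 then D 1 b else D (Suc j) 0) ` {..<P - 1}"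
        by (rule image_cong[OF refl]) (simp only: T_D option.sel)
      show ?thesis unfolding a b T_Zp option.sel by (rule refl)
    qed
  also have "\<dots> = EE (P - 1)"
  proof (rule set_eqI, rule iffI)
    fix x assume xin: "x \<in> insert (D 1 b) ((\<lambda>j. if Suc j = 1 then D 1 b else D (Suc j) 0) ` {..<P - 1})"
    show "x \<in> EE (P - 1)"
    proof (cases "x = D 1 b")
      case True thus ?thesis by (simp add: EE_def)
    next
      case False
      have "x \<in> (\<lambda>j. if Suc j = 1 then D 1 b else D (Suc j) 0) ` {..<P - 1}" using xin False by blast
      then obtain j where j: "j < P - 1" "x = (if Suc j = 1 then D 1 b else D (Suc j) 0)" by blast
      have j0: "j \<noteq> 0" using j False by (cases "j = 0") auto
      hence "x = D (Suc j) 0" using j by simp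
      moreover have "Suc j \<in> {2..P - 1}" using j j0 by auto
      ultimately show ?thesis unfolding EE_def by blast
    qed
  next
    fix x assume x: "x \<in> EE (P - 1)"
    show "x \<in> insert (D 1 b) ((\<lambda>j. if Suc j = 1 then D 1 b else D (Suc j) 0) ` {..<P - 1})"
    proof (cases "x = D 1 b")
      case True thus ?thesis by simp
    next
      case False
      then obtain p where p: "p \<in> {2..P - 1}" "x = D p 0" using x unfolding EE_def by blast
      hence pp: "p - 1 \<in> {..<P - 1}" "Suc (p - 1) \<noteq> 1" "Suc (p - 1) = p" by auto
      hence "x = (\<lambda>j. if Suc j = 1 then D 1 b else D (Suc j) 0) (p - 1)" using p by simp
      thus ?thesis using pp(1) by blast
    qed
  qed
  finally show "img (insert Zp ((\<lambda>j. D (Suc j) 0) ` {..<P - 1})) 0 = EE (P - 1)" .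
qed

lemma round: "2 \<le> m \<Longrightarrow> \<exists>w. reach (EE m) w (EE (m - 1))"
proof -
  assume m: "2 \<le> m"
  let ?M = "insert Zp ((\<lambda>p. D (p - 1) 0) ` {2..m})"
  have d1: "defd (EE m) 2" unfolding defd_def EE_def
  proof
    fix x assume "x \<in> insert (D 1 b) ((\<lambda>p. D p 0) ` {2..m})"
    then consider "x = D 1 b" | p where "p \<in> {2..m}" "x = D p 0" by blast
    thus "Dl x 2 \<noteq> None"
    proof cases
      case 1 thus ?thesis using W_D1b by simp
    next
      case (2 p) thus ?thesis using W_D2[of p 0] by simp
    qed
  qed
  have imgeq: "(\<lambda>p. the (Dl (D p 0) 2)) ` {2..m} = (\<lambda>p. D (p - 1) 0) ` {2..m}"
  proof (rule image_cong[OF refl])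
    fix p assume "p \<in> {2..m}"
    hence "2 \<le> p" by simp
    show "the (Dl (D p 0) 2) = D (p - 1) 0" by (simp only: W_D2[OF \<open>2 \<le> p\<close>] option.sel)
  qed
  have i0: "img (EE m) 2 = insert (the (Dl (D 1 b) 2)) ((\<lambda>p. the (Dl (D p 0) 2)) ` {2..m})"
    unfolding EE_def using img_ins[of "D 1 b" "\<lambda>p. D p 0" "{2..m}" 2] by simp
  have i1: "img (EE m) 2 = ?M"
    unfolding i0 W_D1b option.sel imgeq by (rule refl)
  have i2a: "img ?M 0 = insert (the (Dl Zp 0)) ((\<lambda>p. the (Dl (D (p - 1) 0) 0)) ` {2..m})"
    using img_ins[of Zp "\<lambda>p. D (p - 1) 0" "{2..m}" 0] by simp
  have i2b: "(\<lambda>p. the (Dl (D (p - 1) 0) 0)) ` {2..m} = (\<lambda>p. if p - 1 = 1 then D 1 b else D (p - 1) 0) ` {2..m}"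
    by (rule image_cong[OF refl]) (simp only: T_D option.sel)
  have i2: "img ?M 0 = insert (D 1 b) ((\<lambda>p. if p - 1 = 1 then D 1 b else D (p - 1) 0) ` {2..m})"
    unfolding i2a i2b T_Zp option.sel by (rule refl)
  also have "\<dots> = EE (m - 1)"
  proof (rule set_eqI, rule iffI)
    fix x assume xin: "x \<in> insert (D 1 b) ((\<lambda>p. if p - 1 = 1 then D 1 b else D (p - 1) 0) ` {2..m})"
    show "x \<in> EE (m - 1)"
    proof (cases "x = D 1 b")
      case True thus ?thesis by (simp add: EE_def)
    next
      case False
      have "x \<in> (\<lambda>p. if p - 1 = 1 then D 1 b else D (p - 1) 0) ` {2..m}" using xin False by blast
      then obtain p where p: "p \<in> {2..m}" "x = (if p - 1 = 1 then D 1 b else D (p - 1) 0)"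
        by blast
      have p1: "p - 1 \<noteq> 1" using p False by (cases "p - 1 = 1") auto
      hence "x = D (p - 1) 0" using p by simp
      moreover have "p - 1 \<in> {2..m - 1}" using p p1 by auto
      ultimately show ?thesis unfolding EE_def by blast
    qed
  next
    fix x assume x: "x \<in> EE (m - 1)"
    show "x \<in> insert (D 1 b) ((\<lambda>p. if p - 1 = 1 then D 1 b else D (p - 1) 0) ` {2..m})"
    proof (cases "x = D 1 b")
      case True thus ?thesis by simp
    next
      case False
      then obtain q where q: "q \<in> {2..m - 1}" "x = D q 0" using x unfolding EE_def by blast
      hence qq: "Suc q \<in> {2..m}" "Suc q - 1 \<noteq> 1" "Suc q - 1 = q" by auto
      hence "x = (\<lambda>p. if p - 1 = 1 then D 1 b else D (p - 1) 0) (Suc q)" using q by simp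
      thus ?thesis using qq(1) by blast
    qed
  qed
  finally have i2': "img ?M 0 = EE (m - 1)" .
  have "reach (EE m) [2] (img (EE m) 2)" by (rule reach_step) (use d1 in auto)
  hence r1: "reach (EE m) [2] ?M" unfolding i1 .
  have "reach ?M [0] (img ?M 0)" by (rule reach_step) (auto intro: defd0)
  hence r2: "reach ?M [0] (EE (m - 1))" unfolding i2' .
  show ?thesis using reach_trans[OF r1 r2] by blast
qed

lemma rounds: "1 \<le> m \<Longrightarrow> \<exists>w. reach (EE m) w (EE 1)"
proof (induction m)
  case 0 thus ?case by simp
next
  case (Suc m)
  show ?case
  proof (cases "m = 0")
    case True thus ?thesis using reach_Nil by auto
  next
    case False
    hence "\<exists>w. reach (EE (Suc m)) w (EE m)" using round[of "Suc m"] by simp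
    moreover have "\<exists>w. reach (EE m) w (EE 1)" using Suc.IH False by simp
    ultimately show ?thesis using reach_ex_trans by blast
  qed
qed

lemma EE1: "EE 1 = {D 1 b}" by (simp add: EE_def)

lemma exists_reach: "\<exists>w. reach UU w {D 1 b}"
proof -
  let ?F = "\<lambda>j. if j < P - 1 then b - 1 else (0::nat)"
  let ?O = "ee ?F (P - 2)"
  have r1: "reach UU [0] I0" using reach_step[of 0 UU] UU_T by simp
  have nc0: "\<forall>j<P - 1. (\<lambda>_. 0::nat) j \<noteq> b" using b2 by simp
  note RR = R_cfg[OF valid_I0 nc0]
  have R0: "defd I0 1" "img I0 1 = cfg (rot 1) (\<lambda>_. 0)"
    unfolding I0_def using RR by blast+
  have rot1: "rot 1 = 0" by (simp add: rot_def)
  have r2: "reach I0 [1] (cfg 0 (\<lambda>_. 0))" using reach_step[OF _ R0(1)] R0(2) rot1 by simp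
  have v00: "valid 0 (\<lambda>_. 0)" using b2 by (simp add: valid0)
  have r3: "\<exists>w. reach (cfg 0 (\<lambda>_. 0)) w (cfg 0 ?F)"
    using count[of "P - 1" "\<lambda>_. 0"] v00 by simp
  have vF: "valid 0 ?F" using b2 by (simp add: valid0)
  have ch: "(\<exists>w. reach (cfg 0 ?F) w (cfg (P - 1 - (P - 2)) ?O)) \<and> valid (P - 1 - (P - 2)) ?O"
    by (rule chain) (use vF in auto)
  have p1: "P - 1 - (P - 2) = 1" using P2 by simp
  have r4: "\<exists>w. reach (cfg 0 ?F) w (cfg 1 ?O)" using ch unfolding p1 by blast
  have vO: "valid 1 ?O" using ch unfolding p1 by blast
  have ob: "?O (P - 2) = b" using P2 b2 by (simp add: ee_def)
  have oz: "\<forall>j<P - 2. ?O j = 0" by (simp add: ee_def)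
  have ov: "defd (cfg 1 ?O) 2" "img (cfg 1 ?O) 2 = insert Zp ((\<lambda>j. D (Suc j) 0) ` {..<P - 1})"
    using over_img[OF vO ob oz] by blast+
  have r5: "reach (cfg 1 ?O) [2] (insert Zp ((\<lambda>j. D (Suc j) 0) ` {..<P - 1}))"
    using reach_step[OF _ ov(1)] ov(2) by simp
  have a6: "defd (insert Zp ((\<lambda>j. D (Suc j) 0) ` {..<P - 1})) 0"
    "img (insert Zp ((\<lambda>j. D (Suc j) 0) ` {..<P - 1})) 0 = EE (P - 1)" using after_over by auto
  have "reach (insert Zp ((\<lambda>j. D (Suc j) 0) ` {..<P - 1})) [0]
          (img (insert Zp ((\<lambda>j. D (Suc j) 0) ` {..<P - 1})) 0)"
    by (rule reach_step) (use a6 in auto)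
  hence r6: "reach (insert Zp ((\<lambda>j. D (Suc j) 0) ` {..<P - 1})) [0] (EE (P - 1))" using a6 by simp
  have r7: "\<exists>w. reach (EE (P - 1)) w (EE 1)" using rounds P2 by simp
  have "\<exists>w. reach UU w (cfg 0 (\<lambda>_. 0))" using reach_trans[OF r1 r2] by blast
  hence "\<exists>w. reach UU w (cfg 0 ?F)" using r3 reach_ex_trans by blast
  hence "\<exists>w. reach UU w (cfg 1 ?O)" using r4 reach_ex_trans by blast
  hence "\<exists>w. reach UU w (insert Zp ((\<lambda>j. D (Suc j) 0) ` {..<P - 1}))" using r5 reach_ex_trans by blast
  hence "\<exists>w. reach UU w (EE (P - 1))" using r6 reach_ex_trans by blast
  hence "\<exists>w. reach UU w (EE 1)" using r7 reach_ex_trans by blast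
  thus ?thesis using EE1 by simp
qed

lemma sync: "\<exists>w. carefully_sync NN 3 dd w"
proof -
  obtain w where r: "reach UU w {D 1 b}" using exists_reach by blast
  have ws: "set w \<subseteq> {..<3}" using r by (simp add: reach_def)
  have all: "\<forall>x\<in>UU. Dw x w = Some (D 1 b)"
  proof
    fix x assume x: "x \<in> UU"
    have "Dw x w \<noteq> None" "the (Dw x w) \<in> {D 1 b}" using r x by (auto simp: reach_def)
    thus "Dw x w = Some (D 1 b)" by auto
  qed
  have "\<forall>p<NN. delta_word dd p w = Some (enc (D 1 b))"
  proof (intro allI impI)
    fix p assume p: "p < NN"
    have "delta_word dd p w = delta_word dd (enc (dec p)) w" using enc_dec[OF p] by simp
    also have "\<dots> = map_option enc (Dw (dec p) w)" using bridge[OF dec_UU[OF p] ws] .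
    also have "\<dots> = Some (enc (D 1 b))" using all dec_UU[OF p] by simp
    finally show "delta_word dd p w = Some (enc (D 1 b))" .
  qed
  thus ?thesis using ws unfolding carefully_sync_def by blast
qed

theorem car_bound: "P * b ^ (P - 1) + 3 \<le> car NN 3"
proof -
  obtain w where "carefully_sync NN 3 dd w" using sync by blast
  thus ?thesis using car_ge[OF pdfa _ lower] by blast
qed

end

theorem theorem2:
  fixes n k :: nat
  assumes "k \<ge> 1" and "n = 5 * k + 4"
  shows "4 ^ ((n - 4) div 5) \<le> car n 3"
proof -
  have kd: "(n - 4) div 5 = k" using assms by simp
  consider "k = 1" | "k = 2" | "k = 3" | "4 \<le> k" using assms(1) by linarith
  thus ?thesis
  proof cases
    case 1
    interpret I: cfam 2 2 1 by unfold_locales simp_all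
    have nn: "I.NN = n" unfolding I.NN_def using assms 1 by simp
    have "2 * 2 ^ (2 - 1) + 3 \<le> car I.NN 3" by (rule I.car_bound)
    thus ?thesis using nn kd 1 by simp
  next
    case 2
    interpret I: cfam 2 4 0 by unfold_locales simp_all
    have nn: "I.NN = n" using assms 2 by (simp add: I.NN_def)
    have "4 * 2 ^ (4 - 1) + 3 \<le> car I.NN 3" by (rule I.car_bound)
    thus ?thesis using nn kd 2 by simp
  next
    case 3
    interpret I: cfam 2 5 2 by unfold_locales simp_all
    have nn: "I.NN = n" using assms 3 by (simp add: I.NN_def)
    have "5 * 2 ^ (5 - 1) + 3 \<le> car I.NN 3" by (rule I.car_bound)
    thus ?thesis using nn kd 3 by simp
  next
    case 4
    interpret I: cfam 4 k 2 by unfold_locales (use 4 in simp_all)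
    have nn: "I.NN = n" using assms by (simp add: I.NN_def)
    have cb: "k * 4 ^ (k - 1) + 3 \<le> car I.NN 3" by (rule I.car_bound)
    have "4 ^ k = 4 * 4 ^ (k - 1)" using 4 by (metis Suc_pred' less_le_trans numeral_less_iff one_less_numeral_iff power_Suc semiring_norm(68) zero_less_numeral)
    also have "\<dots> \<le> k * 4 ^ (k - 1)" using 4 by (intro mult_le_mono1) simp
    finally have "4 ^ k \<le> car I.NN 3" using cb by simp
    thus ?thesis using nn kd by simp
  qed
qed

end
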